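(* Let $\alpha>-1$, $\beta>0$, $n\ge 0$, and let $p_n(t)=\sum_{k=0}^n h_{n,k}\frac{(-\beta t)^k}{k!}$ with coefficients $h_{n,k}$ as in the context. If $p_n(t)>0$ for all $t>0$, then $(-1)^n h_{n,n}\ge 0$ and $h_{n,0}\ge 0$. Conversely, if $h_{n,0}>0$ and $(-1)^n h_{n,n}>0$, then there exist $t_1>0$ and $t_2>0$ (not necessarily distinct, possibly infinite) such that $p_n(t)>0$ for all $t\in(0,t_1)\cup(t_2,+\infty)$.
   Context: Here $T$ is a positive random variable with finite moments (in the paper, the first-passage time of a CIR process through a constant threshold), $\mathcal{B}_j^{(\alpha)}=\sum_{i=0}^j\binom{j}{i}\frac{(-\beta)^i\mathbb{E}[T^i]}{\Gamma(\alpha+i+1)}$, and $h_{n,k}=\sum_{j=k}^n\mathcal{B}_j^{(\alpha)}\binom{\alpha+j}{j-k}$, where $\binom{\alpha+j}{j-k}=1$ if $j=k$ and $\binom{\alpha+j}{j-k}=\frac{(\alpha+j)(\alpha+j-1)\cdots(\alpha+k+1)}{(j-k)!}$ if $j>k$. The truncated Laguerre–gamma approximation of the density of $T$ is $\hat g_n(t)=f_{\alpha,\beta}(t)p_n(t)$ with $f_{\alpha,\beta}(t)=\beta(\beta t)^\alpha e^{-\beta t}/\Gamma(\alpha+1)$. *)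

theory Defs
  imports "HOL-Probability.Probability"
begin

definition moment :: "'a measure \<Rightarrow> ('a \<Rightarrow> real) \<Rightarrow> nat \<Rightarrow> real" where
  "moment M T i = integral\<^sup>L M (\<lambda>x. T x ^ i)"

definition B_coef :: "'a measure \<Rightarrow> ('a \<Rightarrow> real) \<Rightarrow> real \<Rightarrow> real \<Rightarrow> nat \<Rightarrow> real" where
  "B_coef M T \<alpha> \<beta> j =
     (\<Sum>i=0..j. real (j choose i) * (-\<beta>) ^ i * moment M T i / Gamma (\<alpha> + real i + 1))"

definition h_coef :: "'a measure \<Rightarrow> ('a \<Rightarrow> real) \<Rightarrow> real \<Rightarrow> real \<Rightarrow> nat \<Rightarrow> nat \<Rightarrow> real" where
  "h_coef M T \<alpha> \<beta> n k = (\<Sum>j=k..n. B_coef M T \<alpha> \<beta> j * ((\<alpha> + real j) gchoose (j - k)))"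

definition p_poly :: "'a measure \<Rightarrow> ('a \<Rightarrow> real) \<Rightarrow> real \<Rightarrow> real \<Rightarrow> nat \<Rightarrow> real \<Rightarrow> real" where
  "p_poly M T \<alpha> \<beta> n t = (\<Sum>k=0..n. h_coef M T \<alpha> \<beta> n k * (-\<beta> * t) ^ k / fact k)"

end

theory Submission
  imports Defs "HOL-Computational_Algebra.Polynomial"
begin

lemma poly_big:
  fixes c :: "nat \<Rightarrow> real"
  assumes "c n > 0"
  shows "\<exists>T. \<forall>t\<ge>T. (\<Sum>k=0..n. c k * t ^ k) > 0"
proof -
  define P where "P = (\<Sum>k\<in>{0..n}. monom (c k) k)"
  have co: "coeff P i = (if i \<le> n then c i else 0)" for i
    unfolding P_def coeff_sum by (simp add: coeff_monom)
  have "degree P \<le> n" unfolding P_def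
    by (rule degree_sum_le) (auto intro: order.trans[OF degree_monom_le])
  moreover have "n \<le> degree P" using assms co[of n] by (intro le_degree) auto
  ultimately have dn: "degree P = n" by simp
  have lc: "lead_coeff P = c n" using dn co by simp
  have pv: "poly P t = (\<Sum>k=0..n. c k * t ^ k)" for t
    unfolding P_def poly_sum by (simp add: poly_monom)
  obtain T where "\<forall>x\<ge>T. poly P x \<ge> lead_coeff P" using poly_pinfty_gt_lc[of P] lc assms by auto
  then show ?thesis using lc assms pv by (metis less_le_trans)
qed

lemma poly_tend0:
  fixes c :: "nat \<Rightarrow> real"
  shows "((\<lambda>t. \<Sum>k=0..n. c k * t ^ k) \<longlongrightarrow> c 0) (at_right 0)"
proof -
  have "((\<lambda>t. \<Sum>k=0..n. c k * t ^ k) \<longlongrightarrow> (\<Sum>k=0..n. c k * 0 ^ k)) (at_right (0::real))"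
    by (intro tendsto_intros)
  moreover have "(\<Sum>k=0..n. c k * (0::real) ^ k) = c 0"
    by (simp add: power_0_left sum.atLeast_Suc_atMost)
  ultimately show ?thesis by simp
qed

theorem proposition2:
  fixes M :: "'a measure" and T :: "'a \<Rightarrow> real"
    and \<alpha> \<beta> :: real and n :: nat
  assumes "prob_space M"
    and "T \<in> borel_measurable M"
    and "AE x in M. T x > 0"
    and "\<And>i::nat. integrable M (\<lambda>x. T x ^ i)"
    and "\<alpha> > -1" and "\<beta> > 0"
  shows "((\<forall>t>0. p_poly M T \<alpha> \<beta> n t > 0) \<longrightarrow>
            (-1) ^ n * h_coef M T \<alpha> \<beta> n n \<ge> 0 \<and> h_coef M T \<alpha> \<beta> n 0 \<ge> 0)
       \<and> ((h_coef M T \<alpha> \<beta> n 0 > 0 \<and> (-1) ^ n * h_coef M T \<alpha> \<beta> n n > 0) \<longrightarrow>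
            (\<exists>t1>0. \<exists>t2>0. \<forall>t. ((0 < t \<and> t < t1) \<or> t2 < t) \<longrightarrow> p_poly M T \<alpha> \<beta> n t > 0))"
proof -
  define h where "h = h_coef M T \<alpha> \<beta> n"
  define c where "c = (\<lambda>k. h k * (-\<beta>) ^ k / fact k)"
  have pe: "p_poly M T \<alpha> \<beta> n t = (\<Sum>k=0..n. c k * t ^ k)" for t
    unfolding p_poly_def c_def h_def
    by (intro sum.cong refl) (simp add: power_mult_distrib[symmetric])
  have c0: "c 0 = h 0" by (simp add: c_def)
  have cn: "c n = ((-1)^n * h n) * (\<beta>^n / fact n)"
    by (simp add: c_def power_minus[of \<beta>])
  have bpos: "\<beta>^n / fact n > 0" using assms(6) by simp
  have gen: "\<And>a b::real. b>0 \<Longrightarrow> (0<a*b \<longleftrightarrow> 0<a) \<and> (a*b<0 \<longleftrightarrow> a<0)"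
    by (simp add: zero_less_mult_iff mult_less_0_iff)
  have sgn_pos: "c n > 0 \<longleftrightarrow> (-1)^n * h n > 0" unfolding cn using gen[OF bpos] by blast
  have sgn_neg: "c n < 0 \<longleftrightarrow> (-1)^n * h n < 0" unfolding cn using gen[OF bpos] by blast
  have lim: "((\<lambda>t. p_poly M T \<alpha> \<beta> n t) \<longlongrightarrow> h 0) (at_right 0)"
    unfolding pe c0[symmetric] by (rule poly_tend0)
  have part1: "(-1) ^ n * h n \<ge> 0 \<and> h 0 \<ge> 0" if H: "\<forall>t>0. p_poly M T \<alpha> \<beta> n t > 0"
  proof
    show "(-1) ^ n * h n \<ge> 0"
    proof (rule ccontr)
      assume "\<not> ?thesis"
      then have "(\<lambda>k. - c k) n > 0" using sgn_neg by simp
      from poly_big[of "\<lambda>k. - c k" n, OF this] obtain S where S: "\<forall>t\<ge>S. (\<Sum>k=0..n. - c k * t ^ k) > 0" by blast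
      define t where "t = max S 1"
      have "(\<Sum>k=0..n. - c k * t ^ k) > 0" using S t_def by simp
      moreover have "(\<Sum>k=0..n. - c k * t ^ k) = - p_poly M T \<alpha> \<beta> n t"
        by (simp add: pe sum_negf)
      moreover have "p_poly M T \<alpha> \<beta> n t > 0" using H t_def by simp
      ultimately show False by simp
    qed
    have ev: "eventually (\<lambda>t. p_poly M T \<alpha> \<beta> n t \<ge> 0) (at_right (0::real))"
      using H by (auto simp: eventually_at_right_field intro!: exI[of _ 1] less_imp_le)
    show "h 0 \<ge> 0"
      by (rule tendsto_lowerbound[OF lim ev]) simp
  qed
  have part2: "\<exists>t1>0. \<exists>t2>0. \<forall>t. ((0 < t \<and> t < t1) \<or> t2 < t) \<longrightarrow> p_poly M T \<alpha> \<beta> n t > 0"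
    if H0: "h 0 > 0" and Hn: "(-1) ^ n * h n > 0"
  proof -
    have "eventually (\<lambda>t. p_poly M T \<alpha> \<beta> n t > 0) (at_right (0::real))"
      using order_tendstoD(1)[OF lim H0] .
    then obtain t1 where t1: "t1 > 0" "\<forall>t. 0 < t \<and> t < t1 \<longrightarrow> p_poly M T \<alpha> \<beta> n t > 0"
      by (auto simp: eventually_at_right_field)
    obtain S where S: "\<forall>t\<ge>S. (\<Sum>k=0..n. c k * t ^ k) > 0"
      using poly_big[of c n] sgn_pos Hn by blast
    show ?thesis
      apply (rule exI[of _ t1], simp add: t1(1))
      apply (rule exI[of _ "max S 1"])
      using t1 S pe by auto
  qed
  show ?thesis using part1 part2 unfolding h_def by blast
qed

end
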